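(* Every $d$-degenerate graph $G$ satisfies $\operatorname{tww}(G)\leq\sqrt{2d|V(G)|}+2d$.
   Context: All graphs are finite and simple. A graph $G$ is $d$-degenerate if there is a linear order $v_1,\dots,v_n$ of $V(G)$ such that each $v_i$ has at most $d$ neighbors among $v_1,\dots,v_{i-1}$. A trigraph is a graph whose edges are each colored red or black; a graph is viewed as a trigraph with all edges black. The red degree of a vertex is the number of red edges incident to it. For a partition $\mathcal{P}$ of $V(G)$, the quotient trigraph $G/\mathcal{P}$ has vertex set $\mathcal{P}$; two distinct parts $U,W$ are joined by a black edge if every pair $\{u,w\}$ with $u\in U,w\in W$ is a black edge of $G$, are non-adjacent if no such pair is an edge of $G$, and are joined by a red edge otherwise. A contraction sequence of an $n$-vertex trigraph $G$ is a sequence $\mathcal{P}_n,\dots,\mathcal{P}_1$ of partitions of $V(G)$ where $\mathcal{P}_n$ is the partition into singletons and each $\mathcal{P}_i$ arises from $\mathcal{P}_{i+1}$ by merging two parts. Its width is the maximum red degree over all $G/\mathcal{P}_i$. The twin-width $\operatorname{tww}(G)$ is the minimum width of a contraction sequence of $G$. *)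

theory Defs
  imports Complex_Main
begin

definition simple_graph :: "'a set \<Rightarrow> ('a \<Rightarrow> 'a \<Rightarrow> bool) \<Rightarrow> bool" where
  "simple_graph V E \<longleftrightarrow> finite V \<and> (\<forall>u v. E u v \<longrightarrow> E v u) \<and> (\<forall>u. \<not> E u u)
     \<and> (\<forall>u v. E u v \<longrightarrow> u \<in> V \<and> v \<in> V)"

definition degenerate :: "'a set \<Rightarrow> ('a \<Rightarrow> 'a \<Rightarrow> bool) \<Rightarrow> nat \<Rightarrow> bool" where
  "degenerate V E d \<longleftrightarrow> (\<exists>vs. distinct vs \<and> set vs = V \<and>
     (\<forall>i < length vs. card {j. j < i \<and> E (vs ! i) (vs ! j)} \<le> d))"

text \<open>In the quotient trigraph G/P of a graph G (all edges black), two distinct parts U, W are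
  joined by a red edge iff some pair is an edge and some pair is not an edge
  (i.e. neither all pairs are (black) edges, nor no pair is an edge).\<close>
definition red_edge :: "('a \<Rightarrow> 'a \<Rightarrow> bool) \<Rightarrow> 'a set \<Rightarrow> 'a set \<Rightarrow> bool" where
  "red_edge E U W \<longleftrightarrow> \<not> (\<forall>u\<in>U. \<forall>w\<in>W. E u w) \<and> \<not> (\<forall>u\<in>U. \<forall>w\<in>W. \<not> E u w)"

definition red_degree :: "('a \<Rightarrow> 'a \<Rightarrow> bool) \<Rightarrow> 'a set set \<Rightarrow> 'a set \<Rightarrow> nat" where
  "red_degree E P U = card {W \<in> P. W \<noteq> U \<and> red_edge E U W}"

definition max_red_degree :: "('a \<Rightarrow> 'a \<Rightarrow> bool) \<Rightarrow> 'a set set \<Rightarrow> nat" where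
  "max_red_degree E P = Max (insert 0 (red_degree E P ` P))"

definition contraction_sequence :: "'a set \<Rightarrow> (nat \<Rightarrow> 'a set set) \<Rightarrow> bool" where
  "contraction_sequence V P \<longleftrightarrow>
     P (card V) = (\<lambda>v. {v}) ` V \<and>
     (\<forall>i. 1 \<le> i \<and> i < card V \<longrightarrow>
        (\<exists>A\<in>P (Suc i). \<exists>B\<in>P (Suc i). A \<noteq> B \<and> P i = (P (Suc i) - {A, B}) \<union> {A \<union> B}))"

definition cs_width :: "'a set \<Rightarrow> ('a \<Rightarrow> 'a \<Rightarrow> bool) \<Rightarrow> (nat \<Rightarrow> 'a set set) \<Rightarrow> nat" where
  "cs_width V E P = Max (insert 0 ((\<lambda>i. max_red_degree E (P i)) ` {1..card V}))"

definition twin_width :: "'a set \<Rightarrow> ('a \<Rightarrow> 'a \<Rightarrow> bool) \<Rightarrow> nat" where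
  "twin_width V E = (LEAST k. \<exists>P. contraction_sequence V P \<and> cs_width V E P = k)"

end

theory Submission
  imports Defs
begin


definition blk :: "nat \<Rightarrow> nat set \<Rightarrow> nat \<Rightarrow> nat set" where
  "blk n C p = {j. j < n \<and> (\<forall>c\<in>C. (c \<le> p) = (c \<le> j))}"

definition blocks :: "nat \<Rightarrow> nat set \<Rightarrow> nat set set" where
  "blocks n C = blk n C ` {..<n}"

lemma blk_mem: "p < n \<Longrightarrow> p \<in> blk n C p" by (simp add: blk_def)
lemma blk_sub: "blk n C p \<subseteq> {..<n}" by (auto simp: blk_def)
lemma blk_eq: "q \<in> blk n C p \<Longrightarrow> blk n C q = blk n C p"
proof -
  assume "q \<in> blk n C p"
  then have h: "\<forall>c\<in>C. (c \<le> q) = (c \<le> p)" unfolding blk_def by blast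
  show ?thesis unfolding blk_def using h by blast
qed
lemma blk_convex:
  assumes "i \<in> blk n C p" "k \<in> blk n C p" "i \<le> j" "j \<le> k"
  shows "j \<in> blk n C p"
proof -
  have "j < n" using assms unfolding blk_def by auto
  moreover have "(c \<le> p) = (c \<le> j)" if "c \<in> C" for c
  proof -
    have "(c \<le> p) = (c \<le> i)" "(c \<le> p) = (c \<le> k)" using assms(1,2) that unfolding blk_def by auto
    then show ?thesis using assms(3,4) by linarith
  qed
  ultimately show ?thesis unfolding blk_def by blast
qed

lemma blocks_finite: "finite (blocks n C)" by (simp add: blocks_def)
lemma blocks_sub: "X \<in> blocks n C \<Longrightarrow> X \<subseteq> {..<n}" using blk_sub by (auto simp: blocks_def)
lemma blocks_fin: "X \<in> blocks n C \<Longrightarrow> finite X"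
proof -
  assume "X \<in> blocks n C"
  then have "X \<subseteq> {..<n}" by (rule blocks_sub)
  moreover have "finite {..<n}" by simp
  ultimately show "finite X" by (rule finite_subset)
qed
lemma blocks_nonempty: "X \<in> blocks n C \<Longrightarrow> X \<noteq> {}" using blk_mem by (auto simp: blocks_def)
lemma blocks_disj: "X \<in> blocks n C \<Longrightarrow> Y \<in> blocks n C \<Longrightarrow> X \<noteq> Y \<Longrightarrow> X \<inter> Y = {}"
proof -
  assume a: "X \<in> blocks n C" "Y \<in> blocks n C" "X \<noteq> Y"
  show "X \<inter> Y = {}"
  proof (rule ccontr)
    assume "X \<inter> Y \<noteq> {}"
    then obtain q where q: "q \<in> X" "q \<in> Y" by blast
    obtain p1 p2 where "X = blk n C p1" "Y = blk n C p2" using a unfolding blocks_def by blast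
    then have "blk n C q = X" "blk n C q = Y" using blk_eq[of q n C p1] blk_eq[of q n C p2] q by auto
    then show False using a(3) by simp
  qed
qed
lemma blocks_eq: "X \<in> blocks n C \<Longrightarrow> q \<in> X \<Longrightarrow> X = blk n C q"
proof -
  assume a: "X \<in> blocks n C" "q \<in> X"
  then obtain p where "X = blk n C p" unfolding blocks_def by blast
  then show "X = blk n C q" using blk_eq[of q n C p] a(2) by auto
qed
lemma blocks_convex: "X \<in> blocks n C \<Longrightarrow> i \<in> X \<Longrightarrow> k \<in> X \<Longrightarrow> i \<le> j \<Longrightarrow> j \<le> k \<Longrightarrow> j \<in> X"
proof -
  assume a: "X \<in> blocks n C" "i \<in> X" "k \<in> X" "i \<le> j" "j \<le> k"
  then obtain p where "X = blk n C p" unfolding blocks_def by blast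
  then show "j \<in> X" using blk_convex[of i n C p k j] a by auto
qed

lemma blk_single: assumes "p < n" shows "blk n {1..<n} p = {p}"
proof -
  have "j = p" if "j \<in> blk n {1..<n} p" for j
  proof (rule ccontr)
    assume "j \<noteq> p"
    have jn: "j < n" using that by (simp add: blk_def)
    show False
    proof (cases "j < p")
      case True
      then have "Suc j \<in> {1..<n}" using assms by auto
      then have "(Suc j \<le> p) = (Suc j \<le> j)" using that unfolding blk_def by blast
      then show ?thesis using True by simp
    next
      case False
      then have "Suc p \<in> {1..<n}" using jn \<open>j \<noteq> p\<close> by auto
      then have "(Suc p \<le> p) = (Suc p \<le> j)" using that unfolding blk_def by blast
      then show ?thesis using False \<open>j \<noteq> p\<close> by simp
    qed
  qed
  then show ?thesis using blk_mem[OF assms] by blast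
qed

lemma blocks_single: "blocks n {1..<n} = (\<lambda>p. {p}) ` {..<n}"
  unfolding blocks_def using blk_single by auto

lemma blocks_min_cut:
  assumes "X \<in> blocks n C" "0 < Min X"
  shows "Min X \<in> C"
proof -
  have fin: "finite X" using blocks_sub[OF assms(1)] finite_subset by blast
  have mX: "Min X \<in> X" using fin blocks_nonempty[OF assms(1)] by simp
  have "Min X - 1 \<notin> X" using fin assms(2) by (metis Min_le diff_less not_le zero_less_one)
  moreover have X: "X = blk n C (Min X)" using blocks_eq[OF assms(1) mX] .
  moreover have "Min X - 1 < n" using mX blocks_sub[OF assms(1)] by auto
  ultimately have "\<not> (\<forall>c\<in>C. (c \<le> Min X) = (c \<le> Min X - 1))"
    unfolding blk_def by blast
  then obtain c where "c \<in> C" "(c \<le> Min X) \<noteq> (c \<le> Min X - 1)" by blast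
  then have "c = Min X" by auto
  with \<open>c \<in> C\<close> show ?thesis by simp
qed

lemma blocks_card:
  assumes "finite C"
  shows "card (blocks n C) \<le> card C + 1"
proof -
  have "inj_on Min (blocks n C)"
  proof (rule inj_onI)
    fix X Y assume XY: "X \<in> blocks n C" "Y \<in> blocks n C" "Min X = Min Y"
    have "Min X \<in> X" using XY(1) by (intro Min_in blocks_fin blocks_nonempty)
    moreover have "Min Y \<in> Y" using XY(2) by (intro Min_in blocks_fin blocks_nonempty)
    ultimately show "X = Y" using blocks_disj[OF XY(1,2)] XY(3) by auto
  qed
  moreover have "Min ` blocks n C \<subseteq> insert 0 C"
  proof
    fix m assume "m \<in> Min ` blocks n C"
    then obtain X where "X \<in> blocks n C" "m = Min X" by blast
    then show "m \<in> insert 0 C" using blocks_min_cut[of X n C] by (cases "m = 0") auto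
  qed
  ultimately have "card (blocks n C) \<le> card (insert 0 C)"
    using assms by (intro card_inj_on_le) auto
  also have "\<dots> \<le> card C + 1" using assms by (simp add: card_insert_if)
  finally show ?thesis .
qed



lemma blk_merge_key1:
  assumes "c \<in> C" "C \<subseteq> {1..<n}"
  shows "blk n (C - {c}) (c - 1) = blk n C (c - 1) \<union> blk n C c"
proof (rule set_eqI)
  fix j
  have c1: "1 \<le> c" "c < n" using assms by auto
  show "j \<in> blk n (C - {c}) (c - 1) \<longleftrightarrow> j \<in> blk n C (c - 1) \<union> blk n C c"
  proof
    assume h: "j \<in> blk n (C - {c}) (c - 1)"
    then have jn: "j < n" and hc: "\<And>c'. c' \<in> C \<Longrightarrow> c' \<noteq> c \<Longrightarrow> (c' \<le> c - 1) = (c' \<le> j)"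
      unfolding blk_def by auto
    show "j \<in> blk n C (c - 1) \<union> blk n C c"
    proof (cases "j < c")
      case True
      have "(c' \<le> c - 1) = (c' \<le> j)" if "c' \<in> C" for c'
      proof (cases "c' = c")
        case True then show ?thesis using \<open>j < c\<close> c1 by arith
      next
        case False then show ?thesis using hc that by blast
      qed
      then have "j \<in> blk n C (c - 1)" using jn unfolding blk_def by blast
      then show ?thesis by blast
    next
      case False
      have "(c' \<le> c) = (c' \<le> j)" if "c' \<in> C" for c'
      proof (cases "c' = c")
        case True then show ?thesis using \<open>\<not> j < c\<close> by arith
      next
        case False
        then have "(c' \<le> c) = (c' \<le> c - 1)" using c1 by arith
        then show ?thesis using hc that False by blast
      qed
      then have "j \<in> blk n C c" using jn unfolding blk_def by blast
      then show ?thesis by blast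
    qed
  next
    assume h: "j \<in> blk n C (c - 1) \<union> blk n C c"
    have jn: "j < n" using h unfolding blk_def by auto
    have "(c' \<le> c - 1) = (c' \<le> j)" if "c' \<in> C - {c}" for c'
    proof (cases "j \<in> blk n C (c - 1)")
      case True then show ?thesis using that unfolding blk_def by blast
    next
      case False
      then have "j \<in> blk n C c" using h by blast
      then have "(c' \<le> c) = (c' \<le> j)" using that unfolding blk_def by blast
      moreover have "(c' \<le> c) = (c' \<le> c - 1)" using c1 that by auto
      ultimately show ?thesis by simp
    qed
    then show "j \<in> blk n (C - {c}) (c - 1)" using jn unfolding blk_def by blast
  qed
qed

lemma blk_merge_key2:
  assumes "c \<in> C" "C \<subseteq> {1..<n}" "p < n" "p \<notin> blk n C (c - 1)" "p \<notin> blk n C c"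
  shows "blk n (C - {c}) p = blk n C p"
proof (rule set_eqI)
  fix j
  have c1: "1 \<le> c" "c < n" using assms by auto
  show "j \<in> blk n (C - {c}) p \<longleftrightarrow> j \<in> blk n C p"
  proof
    assume h: "j \<in> blk n (C - {c}) p"
    then have jn: "j < n" and hc: "\<And>c'. c' \<in> C \<Longrightarrow> c' \<noteq> c \<Longrightarrow> (c' \<le> p) = (c' \<le> j)"
      unfolding blk_def by auto
    have "(c \<le> p) = (c \<le> j)"
    proof (rule ccontr)
      assume ne: "(c \<le> p) \<noteq> (c \<le> j)"
      show False
      proof (cases "p < c")
        case True
        then have jc: "c \<le> j" using ne by auto
        from assms(4) assms(3) c1 obtain c' where c': "c' \<in> C" "(c' \<le> c - 1) \<noteq> (c' \<le> p)"
          unfolding blk_def by auto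
        then have "p < c'" "c' \<le> c - 1" using True by auto
        then have "c' \<noteq> c" by auto
        then have "(c' \<le> p) = (c' \<le> j)" using hc c'(1) by blast
        then show False using \<open>p < c'\<close> \<open>c' \<le> c - 1\<close> jc by auto
      next
        case False
        then have jc: "j < c" using ne by auto
        from assms(5) assms(3) c1 obtain c' where c': "c' \<in> C" "(c' \<le> c) \<noteq> (c' \<le> p)"
          unfolding blk_def by auto
        then have "c < c'" "c' \<le> p" using False by auto
        then have "c' \<noteq> c" by auto
        then have "(c' \<le> p) = (c' \<le> j)" using hc c'(1) by blast
        then show False using \<open>c < c'\<close> \<open>c' \<le> p\<close> jc by auto
      qed
    qed
    then have "\<forall>c'\<in>C. (c' \<le> p) = (c' \<le> j)" using hc by blast
    then show "j \<in> blk n C p" using jn unfolding blk_def by blast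
  next
    assume "j \<in> blk n C p"
    then show "j \<in> blk n (C - {c}) p" unfolding blk_def by blast
  qed
qed

lemma blocks_merge:
  assumes "c \<in> C" "C \<subseteq> {1..<n}"
  shows "blk n C (c - 1) \<in> blocks n C" "blk n C c \<in> blocks n C" "blk n C (c - 1) \<noteq> blk n C c"
    "blocks n (C - {c}) = (blocks n C - {blk n C (c - 1), blk n C c}) \<union> {blk n C (c - 1) \<union> blk n C c}"
proof -
  have c1: "1 \<le> c" "c < n" using assms by auto
  show A: "blk n C (c - 1) \<in> blocks n C" "blk n C c \<in> blocks n C"
    unfolding blocks_def using c1 by auto
  have "c \<in> blk n C c" using c1 by (rule_tac blk_mem) simp
  moreover have "c \<notin> blk n C (c - 1)"
  proof
    assume "c \<in> blk n C (c - 1)"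
    then have "(c \<le> c - 1) = (c \<le> c)" using assms(1) unfolding blk_def by blast
    then show False using c1 by simp
  qed
  ultimately show ne: "blk n C (c - 1) \<noteq> blk n C c" by blast
  let ?A = "blk n C (c - 1)" and ?B = "blk n C c"
  have k1: "blk n (C - {c}) (c - 1) = ?A \<union> ?B" using blk_merge_key1[OF assms] .
  show "blocks n (C - {c}) = (blocks n C - {?A, ?B}) \<union> {?A \<union> ?B}"
  proof
    show "blocks n (C - {c}) \<subseteq> (blocks n C - {?A, ?B}) \<union> {?A \<union> ?B}"
    proof
      fix X assume "X \<in> blocks n (C - {c})"
      then obtain p where p: "p < n" "X = blk n (C - {c}) p" unfolding blocks_def by blast
      show "X \<in> (blocks n C - {?A, ?B}) \<union> {?A \<union> ?B}"
      proof (cases "p \<in> ?A \<union> ?B")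
        case True
        then have "p \<in> blk n (C - {c}) (c - 1)" using k1 by simp
        then have "X = ?A \<union> ?B" using p(2) k1 blk_eq by metis
        then show ?thesis by blast
      next
        case False
        then have X: "X = blk n C p" using p blk_merge_key2[OF assms p(1)] by blast
        have "p \<in> X" using X p(1) blk_mem by metis
        then have "X \<noteq> ?A" "X \<noteq> ?B" using False by auto
        moreover have "X \<in> blocks n C" using X p(1) unfolding blocks_def by blast
        ultimately show ?thesis by blast
      qed
    qed
  next
    show "(blocks n C - {?A, ?B}) \<union> {?A \<union> ?B} \<subseteq> blocks n (C - {c})"
    proof
      fix X assume X: "X \<in> (blocks n C - {?A, ?B}) \<union> {?A \<union> ?B}"
      show "X \<in> blocks n (C - {c})"
      proof (cases "X = ?A \<union> ?B")
        case True
        then show ?thesis using k1 c1 unfolding blocks_def by (metis diff_less imageI le_less_trans lessThan_iff zero_less_one le_refl less_imp_diff_less)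
      next
        case False
        then have X1: "X \<in> blocks n C" "X \<noteq> ?A" "X \<noteq> ?B" using X by auto
        then obtain p where p: "p < n" "X = blk n C p" unfolding blocks_def by blast
        have "p \<notin> ?A" using X1(2) p blk_eq by metis
        moreover have "p \<notin> ?B" using X1(3) p blk_eq by metis
        ultimately have "blk n (C - {c}) p = X" using blk_merge_key2[OF assms p(1)] p(2) by simp
        then show ?thesis using p(1) unfolding blocks_def by blast
      qed
    qed
  qed
qed



definition bkn :: "(nat \<Rightarrow> nat \<Rightarrow> bool) \<Rightarrow> nat set \<Rightarrow> nat set" where
  "bkn Ep B = {w. \<exists>u\<in>B. w < u \<and> Ep u w}"

lemma card_meet:
  assumes "finite S" "\<And>X Y. X \<in> P \<Longrightarrow> Y \<in> P \<Longrightarrow> X \<noteq> Y \<Longrightarrow> X \<inter> Y = {}"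
  shows "card {X \<in> P. X \<inter> S \<noteq> {}} \<le> card S"
proof -
  let ?g = "\<lambda>X. SOME w. w \<in> X \<inter> S"
  have g: "?g X \<in> X \<inter> S" if "X \<inter> S \<noteq> {}" for X
    using that by (metis (mono_tags, lifting) ex_in_conv someI_ex)
  have "inj_on ?g {X \<in> P. X \<inter> S \<noteq> {}}"
  proof (rule inj_onI)
    fix X Y assume XY: "X \<in> {X \<in> P. X \<inter> S \<noteq> {}}" "Y \<in> {X \<in> P. X \<inter> S \<noteq> {}}" "?g X = ?g Y"
    have "?g X \<in> X" "?g Y \<in> Y" using g XY(1,2) by auto
    then have "X \<inter> Y \<noteq> {}" using XY(3) by auto
    then show "X = Y" using assms(2) XY(1,2) by blast
  qed
  moreover have "?g ` {X \<in> P. X \<inter> S \<noteq> {}} \<subseteq> S" using g by auto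
  ultimately show ?thesis using assms(1) by (rule_tac card_inj_on_le) auto
qed

lemma red_le_card:
  assumes "finite P" "B \<in> P"
  shows "red_degree E P B \<le> card P - 1"
proof -
  have "red_degree E P B \<le> card (P - {B})" unfolding red_degree_def
    using assms by (intro card_mono) auto
  also have "\<dots> = card P - 1" using assms by simp
  finally show ?thesis .
qed

lemma bkn_card:
  assumes "B \<subseteq> {..<n}" "\<And>u. u < n \<Longrightarrow> card {w. w < u \<and> Ep u w} \<le> d"
  shows "card (bkn Ep B) \<le> d * card B"
proof -
  have fin: "finite B" using assms(1) finite_subset by blast
  have "bkn Ep B = (\<Union>u\<in>B. {w. w < u \<and> Ep u w})" unfolding bkn_def by auto
  then have "card (bkn Ep B) \<le> (\<Sum>u\<in>B. card {w. w < u \<and> Ep u w})"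
    using card_UN_le[OF fin] by simp
  also have "\<dots> \<le> card B * d"
  proof -
    have "\<And>u. u \<in> B \<Longrightarrow> card {w. w < u \<and> Ep u w} \<le> d" using assms by blast
    then have "(\<Sum>u\<in>B. card {w. w < u \<and> Ep u w}) \<le> of_nat (card B) * d" by (rule sum_bounded_above)
    then show ?thesis by simp
  qed
  finally show ?thesis by (simp add: mult.commute)
qed

lemma bkn_finite: "B \<subseteq> {..<n} \<Longrightarrow> finite (bkn Ep B)"
proof -
  assume "B \<subseteq> {..<n}"
  then have "bkn Ep B \<subseteq> {..<n}" unfolding bkn_def by auto
  then show ?thesis using finite_subset by blast
qed

lemma blocks_Min_in: "X \<in> blocks n C \<Longrightarrow> Min X \<in> X"
  using blocks_fin blocks_nonempty Min_in by blast

lemma red_R1: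
  assumes B: "B \<in> blocks n C" and p: "p \<in> B" and fC: "finite C"
  shows "red_degree Ep (blocks n C) B \<le> card (bkn Ep B) + card {c \<in> C. p < c}"
proof -
  let ?R = "{W \<in> blocks n C. W \<noteq> B \<and> red_edge Ep B W}"
  let ?S1 = "{W \<in> blocks n C. W \<inter> bkn Ep B \<noteq> {}}"
  let ?S2 = "{W \<in> blocks n C. p < Min W}"
  have sub: "?R \<subseteq> ?S1 \<union> ?S2"
  proof
    fix W assume W: "W \<in> ?R"
    then have Wb: "W \<in> blocks n C" "W \<noteq> B" "red_edge Ep B W" by auto
    then obtain u w where uw: "u \<in> B" "w \<in> W" "Ep u w" unfolding red_edge_def by blast
    have disj: "W \<inter> B = {}" using blocks_disj[OF Wb(1) B Wb(2)] .
    show "W \<in> ?S1 \<union> ?S2"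
    proof (cases "w < u")
      case True
      then have "w \<in> bkn Ep B" using uw unfolding bkn_def by blast
      then show ?thesis using uw(2) Wb(1) by blast
    next
      case False
      then have uw2: "u < w" using uw disj by (metis IntI emptyE linorder_neqE_nat)
      let ?m = "Min W"
      have mW: "?m \<in> W" using blocks_Min_in[OF Wb(1)] .
      have mle: "?m \<le> w" using uw(2) blocks_fin[OF Wb(1)] by simp
      have "p < ?m"
      proof (rule ccontr)
        assume "\<not> p < ?m"
        then have mp: "?m \<le> p" by simp
        show False
        proof (cases "?m \<le> u")
          case True
          then have "u \<in> W" using blocks_convex[OF Wb(1) mW uw(2)] uw2 by simp
          then show False using uw(1) disj by blast
        next
          case False
          then have "?m \<in> B" using blocks_convex[OF B uw(1) p, of ?m] mp by simp
          then show False using mW disj by blast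
        qed
      qed
      then show ?thesis using Wb(1) by blast
    qed
  qed
  have "red_degree Ep (blocks n C) B = card ?R" unfolding red_degree_def by simp
  also have "\<dots> \<le> card (?S1 \<union> ?S2)" using sub blocks_finite by (intro card_mono) auto
  also have "\<dots> \<le> card ?S1 + card ?S2" by (rule card_Un_le)
  also have "card ?S1 \<le> card (bkn Ep B)"
    using bkn_finite[OF blocks_sub[OF B]] blocks_disj by (intro card_meet) auto
  also have "card ?S2 \<le> card {c \<in> C. p < c}"
  proof -
    have "inj_on Min ?S2"
    proof (rule inj_onI)
      fix X Y assume XY: "X \<in> ?S2" "Y \<in> ?S2" "Min X = Min Y"
      have "X \<in> blocks n C" "Y \<in> blocks n C" using XY by auto
      then have "Min X \<in> X" "Min Y \<in> Y" using blocks_Min_in by auto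
      then have "X \<inter> Y \<noteq> {}" using XY(3) by auto
      then show "X = Y" using blocks_disj \<open>X \<in> blocks n C\<close> \<open>Y \<in> blocks n C\<close> by blast
    qed
    moreover have "Min ` ?S2 \<subseteq> {c \<in> C. p < c}"
      using blocks_min_cut by fastforce
    ultimately show ?thesis using fC by (rule_tac card_inj_on_le) auto
  qed
  finally show ?thesis by simp
qed

lemma red_single_false: "\<not> red_edge E {p} {w}"
  unfolding red_edge_def by auto

lemma red_R2:
  assumes B: "{p} \<in> blocks n C" and sing: "\<And>W. W \<in> blocks n C \<Longrightarrow> Min W < t \<Longrightarrow> \<exists>w. W = {w}"
  shows "red_degree Ep (blocks n C) {p} \<le> card {W \<in> blocks n C. t \<le> Min W}"
proof -
  have "{W \<in> blocks n C. W \<noteq> {p} \<and> red_edge Ep {p} W} \<subseteq> {W \<in> blocks n C. t \<le> Min W}"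
  proof
    fix W assume W: "W \<in> {W \<in> blocks n C. W \<noteq> {p} \<and> red_edge Ep {p} W}"
    show "W \<in> {W \<in> blocks n C. t \<le> Min W}"
    proof (rule ccontr)
      assume "W \<notin> {W \<in> blocks n C. t \<le> Min W}"
      then have "Min W < t" using W by auto
      then obtain w where "W = {w}" using sing W by blast
      then show False using W red_single_false[of Ep p w] by simp
    qed
  qed
  then show ?thesis unfolding red_degree_def using blocks_finite by (intro card_mono) auto
qed



primrec Rc :: "nat \<Rightarrow> nat set \<Rightarrow> nat \<Rightarrow> nat set" where
  "Rc n K 0 = {1..<n}"
| "Rc n K (Suc r) = (if Rc n K r - K \<noteq> {} then Rc n K r - {Max (Rc n K r - K)}
                      else Rc n K r - {Max (Rc n K r)})"

lemma Rc_sub: "Rc n K r \<subseteq> {1..<n}"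
  by (induction r) auto

lemma Rc_fin: "finite (Rc n K r)"
proof -
  have "finite {1..<n}" by simp
  then show ?thesis using Rc_sub by (rule finite_subset[rotated])
qed

lemma Rc_step: "\<exists>c. (c \<in> Rc n K r \<or> Rc n K r = {}) \<and> Rc n K (Suc r) = Rc n K r - {c}"
proof (cases "Rc n K r - K \<noteq> {}")
  case True
  have "Max (Rc n K r - K) \<in> Rc n K r - K" using True Rc_fin by (intro Max_in) auto
  then show ?thesis using True by auto
next
  case False
  show ?thesis
  proof (cases "Rc n K r = {}")
    case True then show ?thesis using False by auto
  next
    case F2: False
    have "Max (Rc n K r) \<in> Rc n K r" using F2 Rc_fin by (intro Max_in) auto
    then show ?thesis using False by auto
  qed
qed

lemma Rc_card: "card (Rc n K r) = (n - 1) - r"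
proof (induction r)
  case 0 then show ?case by simp
next
  case (Suc r)
  obtain c where c: "c \<in> Rc n K r \<or> Rc n K r = {}" "Rc n K (Suc r) = Rc n K r - {c}"
    using Rc_step by blast
  show ?case
  proof (cases "Rc n K r = {}")
    case True then show ?thesis using c Suc by simp
  next
    case False
    then have "c \<in> Rc n K r" using c by blast
    then show ?thesis using c(2) Suc Rc_fin by simp
  qed
qed

lemma Rc_step2: assumes "Suc r < n" shows "\<exists>c \<in> Rc n K r. Rc n K (Suc r) = Rc n K r - {c}"
proof -
  have "card (Rc n K r) \<noteq> 0" using Rc_card[of n K r] assms by simp
  then have "Rc n K r \<noteq> {}" by auto
  then show ?thesis using Rc_step[of n K r] by blast
qed

definition Ph :: "nat \<Rightarrow> nat set \<Rightarrow> nat \<Rightarrow> nat set" where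
  "Ph n K t = {c. 1 \<le> c \<and> c < n \<and> (c \<le> t \<or> c \<in> K)}"

lemma Ph_iff: "x \<in> Ph n K s \<longleftrightarrow> 1 \<le> x \<and> x < n \<and> (x \<le> s \<or> x \<in> K)"
  unfolding Ph_def by simp

lemma Rc_shape:
  assumes "K \<subseteq> {1..<n}"
  shows "(\<exists>t. Rc n K r = Ph n K t) \<or> Rc n K r \<subseteq> K"
proof (induction r)
  case 0
  have "Rc n K 0 = Ph n K n" unfolding Ph_def by auto
  then show ?case by blast
next
  case (Suc r)
  define R where "R = Rc n K r"
  show ?case
  proof (cases "R - K \<noteq> {}")
    case True
    define m where "m = Max (R - K)"
    have RS: "Rc n K (Suc r) = R - {m}" using True unfolding R_def m_def by simp
    have finR: "finite (R - K)" unfolding R_def using Rc_fin by blast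
    have mem: "m \<in> R - K" unfolding m_def using True finR by (intro Max_in) auto
    have ge: "x \<le> m" if "x \<in> R - K" for x unfolding m_def using that finR by (intro Max_ge) auto
    from Suc show ?thesis
    proof
      assume "\<exists>t. Rc n K r = Ph n K t"
      then obtain t where t: "R = Ph n K t" unfolding R_def by blast
      have mt: "m \<le> t" "1 \<le> m" "m \<notin> K" "m < n" using mem Ph_iff[of m n K t] t by auto
      have "R - {m} = Ph n K (m - 1)"
      proof (rule set_eqI)
        fix x
        show "x \<in> R - {m} \<longleftrightarrow> x \<in> Ph n K (m - 1)"
        proof
          assume h: "x \<in> R - {m}"
          then have h1: "1 \<le> x" "x < n" "x \<le> t \<or> x \<in> K" "x \<noteq> m" using t Ph_iff[of x n K t] by auto
          show "x \<in> Ph n K (m - 1)"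
          proof (cases "x \<in> K")
            case True then show ?thesis using h1 Ph_iff[of x n K "m - 1"] by blast
          next
            case False
            then have "x \<le> m" using ge h by blast
            then have "x \<le> m - 1" using h1(4) by arith
            then show ?thesis using h1 Ph_iff[of x n K "m - 1"] by blast
          qed
        next
          assume h: "x \<in> Ph n K (m - 1)"
          then have h1: "1 \<le> x" "x < n" "x \<le> m - 1 \<or> x \<in> K" using Ph_iff[of x n K "m - 1"] by auto
          have "x \<noteq> m" using h1(3) mt by auto
          moreover have "x \<le> t \<or> x \<in> K" using h1(3) mt by auto
          ultimately show "x \<in> R - {m}" using h1 t Ph_iff[of x n K t] by blast
        qed
      qed
      then show ?thesis using RS by auto
    next
      assume "Rc n K r \<subseteq> K"
      then show ?thesis using True unfolding R_def by blast
    qed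
  next
    case False
    then have "R \<subseteq> K" by blast
    moreover have "Rc n K (Suc r) \<subseteq> R" unfolding R_def by auto
    ultimately show ?thesis by blast
  qed
qed

lemma blk_small:
  assumes "p < t" "p < n" "\<And>c. 1 \<le> c \<Longrightarrow> c < n \<Longrightarrow> c \<le> t \<Longrightarrow> c \<in> C"
  shows "blk n C p = {p}"
proof -
  have "j = p" if "j \<in> blk n C p" for j
  proof (rule ccontr)
    assume "j \<noteq> p"
    have jn: "j < n" using that by (simp add: blk_def)
    show False
    proof (cases "j < p")
      case True
      then have "Suc j \<in> C" using assms by auto
      then have "(Suc j \<le> p) = (Suc j \<le> j)" using that unfolding blk_def by blast
      then show ?thesis using True by simp
    next
      case False
      then have "Suc p \<in> C" using jn \<open>j \<noteq> p\<close> assms by auto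
      then have "(Suc p \<le> p) = (Suc p \<le> j)" using that unfolding blk_def by blast
      then show ?thesis using False \<open>j \<noteq> p\<close> by simp
    qed
  qed
  then show ?thesis using blk_mem[OF assms(2)] by blast
qed



lemma F_mono:
  assumes "\<And>k. F k = (\<Sum>j<k. (W - j) div (d::nat))" "a \<le> b"
  shows "F a \<le> F b"
proof -
  have "(\<Sum>j<a. (W - j) div d) \<le> (\<Sum>j<b. (W - j) div d)"
    using assms(2) by (intro sum_mono2) auto
  then show ?thesis using assms(1) by simp
qed

lemma phase1_bound:
  fixes Ep :: "nat \<Rightarrow> nat \<Rightarrow> bool" and F :: "nat \<Rightarrow> nat"
  assumes d: "1 \<le> d"
    and Fdef: "\<And>k. F k = (\<Sum>j<k. (W - j) div d)"
    and FW: "n \<le> F W" and W1: "1 \<le> W" and F1: "1 \<le> F 1"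
    and Kdef: "K = (\<lambda>k. n - F k) ` {k. 1 \<le> k \<and> F k < n}"
    and deg: "\<And>u. u < n \<Longrightarrow> card {w. w < u \<and> Ep u w} \<le> d"
    and B: "B \<in> blocks n (Ph n K t)"
  shows "red_degree Ep (blocks n (Ph n K t)) B \<le> W"
proof -
  define C where "C = Ph n K t"
  have Fm: "\<And>a b. a \<le> b \<Longrightarrow> F a \<le> F b" using F_mono[OF Fdef] by blast
  have FS: "\<And>i. F (Suc i) = F i + (W - i) div d" using Fdef by simp
  have Kmem: "n - F k \<in> K" if "1 \<le> k" "F k < n" for k using that Kdef by blast
  have KC: "K \<subseteq> C"
  proof
    fix c assume "c \<in> K"
    then obtain k where k: "1 \<le> k" "F k < n" "c = n - F k" using Kdef by blast
    have "1 \<le> F k" using Fm[OF k(1)] F1 by simp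
    then have "1 \<le> c" "c < n" using k by auto
    then show "c \<in> C" unfolding C_def using Ph_iff \<open>c \<in> K\<close> by blast
  qed
  have finK: "finite K" unfolding Kdef
  proof -
    have "{k. 1 \<le> k \<and> F k < n} \<subseteq> {1..<W}"
    proof
      fix k assume "k \<in> {k. 1 \<le> k \<and> F k < n}"
      then have "1 \<le> k" "F k < n" by auto
      moreover have "k < W"
      proof (rule ccontr)
        assume "\<not> k < W" then have "F W \<le> F k" using Fm by simp
        then show False using FW \<open>F k < n\<close> by simp
      qed
      ultimately show "k \<in> {1..<W}" by simp
    qed
    then show "finite ((\<lambda>k. n - F k) ` {k. 1 \<le> k \<and> F k < n})"
      using finite_subset by blast
  qed
  have cardK: "card K \<le> W - 1"
  proof -
    have "{k. 1 \<le> k \<and> F k < n} \<subseteq> {1..<W}"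
    proof
      fix k assume "k \<in> {k. 1 \<le> k \<and> F k < n}"
      then have "1 \<le> k" "F k < n" by auto
      moreover have "k < W"
      proof (rule ccontr)
        assume "\<not> k < W" then have "F W \<le> F k" using Fm by simp
        then show False using FW \<open>F k < n\<close> by simp
      qed
      ultimately show "k \<in> {1..<W}" by simp
    qed
    then have "K \<subseteq> (\<lambda>k. n - F k) ` {1..<W}" unfolding Kdef by blast
    then have "card K \<le> card ((\<lambda>k. n - F k) ` {1..<W})" by (intro card_mono) auto
    also have "\<dots> \<le> card {1..<W}" by (rule card_image_le) simp
    finally show ?thesis by simp
  qed
  have finC: "finite C" unfolding C_def Ph_def by simp
  have BC: "B \<in> blocks n C" using B unfolding C_def .
  define p where "p = Min B"
  have pB: "p \<in> B" unfolding p_def using blocks_Min_in[OF BC] .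
  have pn: "p < n" using pB blocks_sub[OF BC] by auto
  have Bp: "B = blk n C p" using blocks_eq[OF BC pB] .
  have Ccut: "\<And>c. 1 \<le> c \<Longrightarrow> c < n \<Longrightarrow> c \<le> t \<Longrightarrow> c \<in> C" unfolding C_def Ph_def by simp
  show ?thesis
  proof (cases "p < t")
    case True
    have B1: "B = {p}" using Bp blk_small[OF True pn Ccut] by simp
    have sing: "\<exists>w. X = {w}" if "X \<in> blocks n C" "Min X < t" for X
    proof -
      have "Min X \<in> X" using blocks_Min_in[OF that(1)] .
      then have "Min X < n" using blocks_sub[OF that(1)] by auto
      then have "blk n C (Min X) = {Min X}" using blk_small[OF that(2) _ Ccut] by simp
      then show ?thesis using blocks_eq[OF that(1) \<open>Min X \<in> X\<close>] by blast
    qed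
    have "red_degree Ep (blocks n C) B \<le> card {W \<in> blocks n C. t \<le> Min W}"
      using red_R2[of p n C t Ep] BC B1 sing by blast
    also have "\<dots> \<le> card (insert t K)"
    proof -
      have "inj_on Min {W \<in> blocks n C. t \<le> Min W}"
      proof (rule inj_onI)
        fix X Y assume XY: "X \<in> {W \<in> blocks n C. t \<le> Min W}" "Y \<in> {W \<in> blocks n C. t \<le> Min W}" "Min X = Min Y"
        have "X \<in> blocks n C" "Y \<in> blocks n C" using XY by auto
        then have "Min X \<in> X" "Min Y \<in> Y" using blocks_Min_in by auto
        then have "X \<inter> Y \<noteq> {}" using XY(3) by auto
        then show "X = Y" using blocks_disj \<open>X \<in> blocks n C\<close> \<open>Y \<in> blocks n C\<close> by blast
      qed
      moreover have "Min ` {W \<in> blocks n C. t \<le> Min W} \<subseteq> insert t K"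
      proof
        fix m assume "m \<in> Min ` {W \<in> blocks n C. t \<le> Min W}"
        then obtain X where X: "X \<in> blocks n C" "t \<le> Min X" "m = Min X" by blast
        show "m \<in> insert t K"
        proof (cases "m = t")
          case False
          then have "t < m" using X by simp
          then have "m \<in> C" using blocks_min_cut[OF X(1)] X(3) by simp
          then show ?thesis using \<open>t < m\<close> unfolding C_def Ph_def by auto
        qed simp
      qed
      ultimately show ?thesis using finK by (rule_tac card_inj_on_le) auto
    qed
    also have "\<dots> \<le> card K + 1" using finK by (simp add: card_insert_if)
    also have "\<dots> \<le> W" using cardK W1 by simp
    finally show ?thesis unfolding C_def .
  next
    case False
    then have pt: "t \<le> p" by simp
    define \<delta> where "\<delta> = n - p"
    have d1: "1 \<le> \<delta>" "\<delta> \<le> n" unfolding \<delta>_def using pn by auto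
    have ex: "\<delta> \<le> F (Suc (W - 1))" using W1 FW d1 by simp
    define i where "i = (LEAST i. \<delta> \<le> F (Suc i))"
    have i1: "\<delta> \<le> F (Suc i)" unfolding i_def using ex by (rule LeastI)
    have i2: "i \<le> W - 1" unfolding i_def using ex by (rule Least_le)
    have i3: "F i < \<delta>"
    proof (cases i)
      case 0 then show ?thesis using Fdef[of 0] d1 by simp
    next
      case (Suc i')
      then have "i' < i" by simp
      then have "\<not> \<delta> \<le> F (Suc i')" unfolding i_def by (rule not_less_Least)
      then show ?thesis using Suc by simp
    qed
    have i4: "\<delta> \<le> F k" if "Suc i \<le> k" for k using Fm[OF that] i1 by simp
    have Bsub: "B \<subseteq> {n - F (Suc i)..<n - F i}"
    proof
      fix j assume jB: "j \<in> B"
      have jn: "j < n" using jB blocks_sub[OF BC] by auto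
      have jp: "\<forall>c\<in>C. (c \<le> p) = (c \<le> j)" using jB Bp unfolding blk_def by blast
      have "j < n - F i"
      proof (rule ccontr)
        assume a: "\<not> j < n - F i"
        have "i \<noteq> 0"
        proof
          assume "i = 0" then have "F i = 0" using Fdef[of 0] by simp
          then show False using a jn by simp
        qed
        then have "n - F i \<in> K" using Kmem i3 d1 by simp
        then have "n - F i \<in> C" using KC by blast
        moreover have "\<not> n - F i \<le> p" using i3 unfolding \<delta>_def by simp
        ultimately show False using jp a by simp
      qed
      moreover have "n - F (Suc i) \<le> j"
      proof (rule ccontr)
        assume a: "\<not> n - F (Suc i) \<le> j"
        then have "F (Suc i) < n" by simp
        then have "n - F (Suc i) \<in> K" using Kmem by simp
        then have "n - F (Suc i) \<in> C" using KC by blast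
        moreover have "n - F (Suc i) \<le> p" using i1 unfolding \<delta>_def by simp
        ultimately show False using jp a by simp
      qed
      ultimately show "j \<in> {n - F (Suc i)..<n - F i}" by simp
    qed
    have cardB: "card B \<le> (W - i) div d"
    proof -
      have "card B \<le> card {n - F (Suc i)..<n - F i}" using Bsub by (intro card_mono) auto
      also have "\<dots> = (n - F i) - (n - F (Suc i))" by simp
      also have "\<dots> \<le> F (Suc i) - F i" by simp
      also have "\<dots> = (W - i) div d" using FS by simp
      finally show ?thesis .
    qed
    have cuts: "{c \<in> C. p < c} \<subseteq> (\<lambda>k. n - F k) ` {1..i}"
    proof
      fix c assume c: "c \<in> {c \<in> C. p < c}"
      then have "c \<in> K" using pt unfolding C_def Ph_def by auto
      then obtain k where k: "1 \<le> k" "F k < n" "c = n - F k" using Kdef by blast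
      have "F k < \<delta>" using c k unfolding \<delta>_def by auto
      then have "k \<le> i" using i4 by (meson not_less_eq_eq not_le)
      then show "c \<in> (\<lambda>k. n - F k) ` {1..i}" using k by auto
    qed
    have cardc: "card {c \<in> C. p < c} \<le> i"
    proof -
      have "card {c \<in> C. p < c} \<le> card ((\<lambda>k. n - F k) ` {1..i})" using cuts by (intro card_mono) auto
      also have "\<dots> \<le> card {1..i}" by (rule card_image_le) simp
      finally show ?thesis by simp
    qed
    have "red_degree Ep (blocks n C) B \<le> card (bkn Ep B) + card {c \<in> C. p < c}"
      using red_R1[OF BC pB finC] .
    also have "card (bkn Ep B) \<le> d * card B" using bkn_card[OF blocks_sub[OF BC] deg] .
    also have "d * card B \<le> d * ((W - i) div d)" using cardB by simp
    also have "d * ((W - i) div d) \<le> W - i" by simp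
    finally have "red_degree Ep (blocks n C) B \<le> W - i + i" using cardc by simp
    then show ?thesis unfolding C_def using i2 W1 by simp
  qed
qed



lemma pos_seq:
  assumes "K \<subseteq> {1..<n}"
  shows "blocks n (Rc n K (n - n)) = (\<lambda>p. {p}) ` {..<n}"
    and "\<And>i. 1 \<le> i \<Longrightarrow> i < n \<Longrightarrow> \<exists>A\<in>blocks n (Rc n K (n - Suc i)). \<exists>B\<in>blocks n (Rc n K (n - Suc i)).
           A \<noteq> B \<and> blocks n (Rc n K (n - i)) = (blocks n (Rc n K (n - Suc i)) - {A, B}) \<union> {A \<union> B}"
proof -
  show "blocks n (Rc n K (n - n)) = (\<lambda>p. {p}) ` {..<n}" using blocks_single by simp
next
  fix i assume i: "1 \<le> i" "i < n"
  define r where "r = n - Suc i"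
  have r: "n - i = Suc r" "Suc r < n" using i unfolding r_def by auto
  obtain c where c: "c \<in> Rc n K r" "Rc n K (Suc r) = Rc n K r - {c}" using Rc_step2[OF r(2)] by blast
  have sub: "Rc n K r \<subseteq> {1..<n}" by (rule Rc_sub)
  note m = blocks_merge[OF c(1) sub]
  show "\<exists>A\<in>blocks n (Rc n K (n - Suc i)). \<exists>B\<in>blocks n (Rc n K (n - Suc i)).
           A \<noteq> B \<and> blocks n (Rc n K (n - i)) = (blocks n (Rc n K (n - Suc i)) - {A, B}) \<union> {A \<union> B}"
  proof -
    have e1: "Rc n K (n - i) = Rc n K r - {c}" using r(1) c(2) by simp
    have e2: "n - Suc i = r" using r_def by simp
    show ?thesis unfolding e1 e2
      using m(1) m(2) m(3) m(4) by blast
  qed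
qed

lemma red_transfer:
  fixes f :: "nat \<Rightarrow> 'a"
  assumes inj: "inj_on f {..<n}" and Qs: "Q \<subseteq> Pow {..<n}" and U: "U \<in> Q" and fQ: "finite Q"
  shows "red_degree E ((`) f ` Q) (f ` U) = red_degree (\<lambda>a b. E (f a) (f b)) Q U"
proof -
  have injP: "inj_on ((`) f) Q" using inj_on_image_Pow[OF inj] Qs inj_on_subset by blast
  have re: "red_edge E (f ` U) (f ` W) = red_edge (\<lambda>a b. E (f a) (f b)) U W" for W
    unfolding red_edge_def by simp
  have "{W' \<in> (`) f ` Q. W' \<noteq> f ` U \<and> red_edge E (f ` U) W'} =
        (`) f ` {W \<in> Q. W \<noteq> U \<and> red_edge (\<lambda>a b. E (f a) (f b)) U W}"
  proof
    show "{W' \<in> (`) f ` Q. W' \<noteq> f ` U \<and> red_edge E (f ` U) W'} \<subseteq>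
        (`) f ` {W \<in> Q. W \<noteq> U \<and> red_edge (\<lambda>a b. E (f a) (f b)) U W}"
    proof
      fix W' assume W': "W' \<in> {W' \<in> (`) f ` Q. W' \<noteq> f ` U \<and> red_edge E (f ` U) W'}"
      then obtain W where W: "W \<in> Q" "W' = f ` W" by blast
      have "W \<noteq> U" using W W' by blast
      moreover have "red_edge (\<lambda>a b. E (f a) (f b)) U W" using W W' re[of W] by simp
      ultimately show "W' \<in> (`) f ` {W \<in> Q. W \<noteq> U \<and> red_edge (\<lambda>a b. E (f a) (f b)) U W}"
        using W by blast
    qed
    show "(`) f ` {W \<in> Q. W \<noteq> U \<and> red_edge (\<lambda>a b. E (f a) (f b)) U W} \<subseteq>
        {W' \<in> (`) f ` Q. W' \<noteq> f ` U \<and> red_edge E (f ` U) W'}"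
    proof
      fix W' assume "W' \<in> (`) f ` {W \<in> Q. W \<noteq> U \<and> red_edge (\<lambda>a b. E (f a) (f b)) U W}"
      then obtain W where W: "W \<in> Q" "W \<noteq> U" "red_edge (\<lambda>a b. E (f a) (f b)) U W" "W' = f ` W" by blast
      have "f ` W \<noteq> f ` U" using inj_on_contraD[OF injP W(2) W(1) U] .
      then show "W' \<in> {W' \<in> (`) f ` Q. W' \<noteq> f ` U \<and> red_edge E (f ` U) W'}" using W re by auto
    qed
  qed
  moreover have "card ((`) f ` {W \<in> Q. W \<noteq> U \<and> red_edge (\<lambda>a b. E (f a) (f b)) U W}) =
      card {W \<in> Q. W \<noteq> U \<and> red_edge (\<lambda>a b. E (f a) (f b)) U W}"
    using injP by (intro card_image) (rule inj_on_subset, auto)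
  ultimately show ?thesis unfolding red_degree_def by simp
qed

lemma transfer:
  fixes f :: "nat \<Rightarrow> 'a" and Q :: "nat \<Rightarrow> nat set set"
  assumes inj: "inj_on f {..<n}" and img: "f ` {..<n} = V"
    and Q1: "Q n = (\<lambda>p. {p}) ` {..<n}"
    and Q2: "\<And>i. 1 \<le> i \<Longrightarrow> i < n \<Longrightarrow> \<exists>A\<in>Q (Suc i). \<exists>B\<in>Q (Suc i). A \<noteq> B \<and> Q i = (Q (Suc i) - {A,B}) \<union> {A \<union> B}"
    and Qsub: "\<And>i. Q i \<subseteq> Pow {..<n}"
    and Qfin: "\<And>i. finite (Q i)"
    and red: "\<And>i B. 1 \<le> i \<Longrightarrow> i \<le> n \<Longrightarrow> B \<in> Q i \<Longrightarrow> red_degree (\<lambda>a b. E (f a) (f b)) (Q i) B \<le> k"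
  shows "twin_width V E \<le> k"
proof -
  have cV: "card V = n" using card_image[OF inj] img by simp
  define P where "P = (\<lambda>i. (`) f ` Q i)"
  have injP: "inj_on ((`) f) (Pow {..<n})" using inj_on_image_Pow[OF inj] .
  have cs: "contraction_sequence V P"
    unfolding contraction_sequence_def
  proof (intro conjI allI impI)
    have "P (card V) = (\<lambda>p. {f p}) ` {..<n}" unfolding P_def cV Q1 by (simp add: image_image)
    also have "\<dots> = (\<lambda>v. {v}) ` (f ` {..<n})" by (simp add: image_image)
    finally show "P (card V) = (\<lambda>v. {v}) ` V" using img by simp
  next
    fix i assume i: "1 \<le> i \<and> i < card V"
    then obtain A B where AB: "A \<in> Q (Suc i)" "B \<in> Q (Suc i)" "A \<noteq> B" "Q i = (Q (Suc i) - {A,B}) \<union> {A \<union> B}"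
      using Q2 cV by blast
    have Asub: "A \<in> Pow {..<n}" "B \<in> Pow {..<n}" using subsetD[OF Qsub AB(1)] subsetD[OF Qsub AB(2)] by auto
    have ne: "f ` A \<noteq> f ` B" using inj_on_contraD[OF injP AB(3) Asub] .
    have "P i = (`) f ` (Q (Suc i) - {A,B}) \<union> {f ` A \<union> f ` B}" unfolding P_def AB(4) by (simp add: image_Un)
    also have "(`) f ` (Q (Suc i) - {A,B}) = P (Suc i) - {f ` A, f ` B}"
    proof -
      have s1: "Q (Suc i) - {A,B} \<subseteq> Pow {..<n}" using Qsub[of "Suc i"] by (rule subset_trans[rotated]) auto
      have s2: "{A,B} \<subseteq> Pow {..<n}" using Asub by blast
      have "(`) f ` (Q (Suc i) - {A,B}) = (`) f ` Q (Suc i) - (`) f ` {A,B}"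
        by (rule inj_on_image_set_diff[OF injP s1 s2])
      then show ?thesis unfolding P_def by simp
    qed
    finally have "P i = (P (Suc i) - {f ` A, f ` B}) \<union> {f ` A \<union> f ` B}" .
    moreover have "f ` A \<in> P (Suc i)" "f ` B \<in> P (Suc i)" unfolding P_def using AB by auto
    ultimately show "\<exists>A\<in>P (Suc i). \<exists>B\<in>P (Suc i). A \<noteq> B \<and> P i = (P (Suc i) - {A, B}) \<union> {A \<union> B}"
      using ne by (intro bexI[where x="f ` A"] bexI[where x="f ` B"] conjI) simp_all
  qed
  have w: "cs_width V E P \<le> k"
    unfolding cs_width_def
  proof (rule Max.boundedI)
    show "finite (insert 0 ((\<lambda>i. max_red_degree E (P i)) ` {1..card V}))" by simp
    show "insert 0 ((\<lambda>i. max_red_degree E (P i)) ` {1..card V}) \<noteq> {}" by simp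
    fix a assume "a \<in> insert 0 ((\<lambda>i. max_red_degree E (P i)) ` {1..card V})"
    then consider "a = 0" | i where "i \<in> {1..card V}" "a = max_red_degree E (P i)" by blast
    then show "a \<le> k"
    proof cases
      case 1 then show ?thesis by simp
    next
      case 2
      show ?thesis unfolding 2(2) max_red_degree_def
      proof (rule Max.boundedI)
        show "finite (insert 0 (red_degree E (P i) ` P i))" unfolding P_def using Qfin by simp
        show "insert 0 (red_degree E (P i) ` P i) \<noteq> {}" by simp
        fix b assume "b \<in> insert 0 (red_degree E (P i) ` P i)"
        then consider "b = 0" | U where "U \<in> Q i" "b = red_degree E (P i) (f ` U)" unfolding P_def by blast
        then show "b \<le> k"
        proof cases
          case 1 then show ?thesis by simp
        next
          case 2
          have "b = red_degree (\<lambda>a b. E (f a) (f b)) (Q i) U"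
            unfolding 2(2) P_def using red_transfer[OF inj Qsub 2(1) Qfin] .
          then show ?thesis using red \<open>i \<in> {1..card V}\<close> cV 2(1) by simp
        qed
      qed
    qed
  qed
  have "\<exists>P'. contraction_sequence V P' \<and> cs_width V E P' = cs_width V E P" using cs by blast
  then have "twin_width V E \<le> cs_width V E P" unfolding twin_width_def by (rule Least_le)
  then show ?thesis using w by simp
qed



lemma sum_bound:
  fixes d W :: nat
  assumes d: "1 \<le> d"
  shows "k \<le> W \<Longrightarrow> int k * (2 * int W + 1 - int k) \<le> 2 * (int d * int (\<Sum>j<k. (W - j) div d) + int k * (int d - 1))"
proof (induction k)
  case 0 then show ?case by simp
next
  case (Suc k)
  then have kW: "k < W" by simp
  define x where "x = W - k"
  have x: "int x = int W - int k" using kW unfolding x_def by simp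
  have dm: "d * (x div d) + x mod d = x" by simp
  have md: "x mod d < d" using d by simp
  have key: "int x \<le> int d * int (x div d) + int d - 1"
  proof -
    have "int x = int d * int (x div d) + int (x mod d)" using dm by (metis of_nat_add of_nat_mult)
    moreover have "int (x mod d) \<le> int d - 1" using md by simp
    ultimately show ?thesis by simp
  qed
  have IH: "int k * (2 * int W + 1 - int k) \<le> 2 * (int d * int (\<Sum>j<k. (W - j) div d) + int k * (int d - 1))"
    using Suc kW by simp
  have "int (\<Sum>j<Suc k. (W - j) div d) = int (\<Sum>j<k. (W - j) div d) + int (x div d)"
    unfolding x_def by simp
  then show ?case using IH key x by (simp add: algebra_simps)
qed

lemma arith_main:
  fixes d n :: nat
  assumes d: "1 \<le> d"
  defines "W \<equiv> nat \<lfloor>sqrt (2 * real d * real n) + 2 * real d\<rfloor>"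
  shows "n \<le> (\<Sum>j<W. (W - j) div d)" "2 * d \<le> W" "real W \<le> sqrt (2 * real d * real n) + 2 * real d"
proof -
  define s where "s = sqrt (2 * real d * real n)"
  have s0: "0 \<le> s" unfolding s_def by simp
  have ss: "s * s = 2 * real d * real n" unfolding s_def by simp
  have fl0: "0 \<le> \<lfloor>s + 2 * real d\<rfloor>" using s0 by simp
  have Wr: "real W = of_int \<lfloor>s + 2 * real d\<rfloor>" unfolding W_def s_def[symmetric] using fl0 by simp
  have W1: "s + 2 * real d - 1 < real W" using Wr by linarith
  show W2: "real W \<le> sqrt (2 * real d * real n) + 2 * real d" using Wr s_def by linarith
  have "real (2 * d) < real W + 1" using W1 s0 by simp
  then show "2 * d \<le> W" by linarith
  define F where "F = (\<Sum>j<W. (W - j) div d)"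
  have sb: "int W * (2 * int W + 1 - int W) \<le> 2 * (int d * int F + int W * (int d - 1))"
    using sum_bound[OF d, of W W] unfolding F_def by simp
  then have sbr: "real W * (real W + 1) \<le> 2 * (real d * real F + real W * (real d - 1))"
  proof -
    have sb2: "int W * (int W + 1) \<le> 2 * (int d * int F + int W * (int d - 1))" using sb by simp
    have "real_of_int (int W * (int W + 1)) \<le> real_of_int (2 * (int d * int F + int W * (int d - 1)))"
      using sb2 by (simp only: of_int_le_iff)
    then show ?thesis by simp
  qed
  have a1: "s \<le> real W" using W1 d by simp
  have a2: "s \<le> real W + 3 - 2 * real d" using W1 by simp
  have "s * s \<le> real W * (real W + 3 - 2 * real d)" using a1 a2 s0 by (intro mult_mono) auto
  then have "2 * real d * real n \<le> 2 * real d * real F" using sbr ss by (simp add: algebra_simps)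
  then have "real n \<le> real F" using d by simp
  then have "n \<le> F" by (simp only: of_nat_le_iff)
  then show "n \<le> (\<Sum>j<W. (W - j) div d)" unfolding F_def .
qed



lemma K_facts:
  fixes F :: "nat \<Rightarrow> nat"
  assumes Fm: "\<And>a b. a \<le> b \<Longrightarrow> F a \<le> F b" and FW: "n \<le> F W" and F1: "1 \<le> F 1"
    and Kdef: "K = (\<lambda>k. n - F k) ` {k. 1 \<le> k \<and> F k < n}"
  shows "K \<subseteq> {1..<n}" "finite K" "card K \<le> W - 1"
proof -
  have sub: "{k. 1 \<le> k \<and> F k < n} \<subseteq> {1..<W}"
  proof
    fix k assume "k \<in> {k. 1 \<le> k \<and> F k < n}"
    then have "1 \<le> k" "F k < n" by auto
    moreover have "k < W"
    proof (rule ccontr)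
      assume "\<not> k < W" then have "F W \<le> F k" using Fm by simp
      then show False using FW \<open>F k < n\<close> by simp
    qed
    ultimately show "k \<in> {1..<W}" by simp
  qed
  then have KW: "K \<subseteq> (\<lambda>k. n - F k) ` {1..<W}" unfolding Kdef by blast
  show "finite K" using KW finite_subset by blast
  have "card K \<le> card ((\<lambda>k. n - F k) ` {1..<W})" using KW by (intro card_mono) auto
  also have "\<dots> \<le> card {1..<W}" by (rule card_image_le) simp
  finally show "card K \<le> W - 1" by simp
  show "K \<subseteq> {1..<n}"
  proof
    fix c assume "c \<in> K"
    then obtain k where k: "1 \<le> k" "F k < n" "c = n - F k" using Kdef by blast
    have "1 \<le> F k" using Fm[OF k(1)] F1 by simp
    then show "c \<in> {1..<n}" using k by auto
  qed
qed

theorem mainTheorem4: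
  fixes V :: "'a set" and E :: "'a \<Rightarrow> 'a \<Rightarrow> bool" and d :: nat
  assumes "simple_graph V E"
    and "degenerate V E d"
  shows "real (twin_width V E) \<le> sqrt (2 * real d * real (card V)) + 2 * real d"
proof -
  obtain vs where vs: "distinct vs" "set vs = V"
    "\<And>i. i < length vs \<Longrightarrow> card {j. j < i \<and> E (vs ! i) (vs ! j)} \<le> d"
    using assms(2) unfolding degenerate_def by blast
  define n where "n = length vs"
  define f where "f = (\<lambda>i. vs ! i)"
  define Ep where "Ep = (\<lambda>a b. E (f a) (f b))"
  have inj: "inj_on f {..<n}" unfolding f_def n_def using vs(1)
    by (simp add: inj_on_def nth_eq_iff_index_eq)
  have img: "f ` {..<n} = V" unfolding f_def n_def using vs(2)
    by (metis atLeast0LessThan list.set_map map_nth set_upt)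
  have cV: "card V = n" using card_image[OF inj] img by simp
  have deg: "\<And>u. u < n \<Longrightarrow> card {w. w < u \<and> Ep u w} \<le> d"
    using vs(3) unfolding Ep_def f_def n_def by simp
  have sym: "\<And>u v. E u v \<Longrightarrow> E v u" and irr: "\<And>u. \<not> E u u"
    using assms(1) unfolding simple_graph_def by auto
  define Q where "Q = (\<lambda>K i. blocks n (Rc n K (n - i)))"
  have Qsub: "\<And>K i. Q K i \<subseteq> Pow {..<n}" unfolding Q_def using blocks_sub by blast
  have Qfin: "\<And>K i. finite (Q K i)" unfolding Q_def using blocks_finite by blast
  show ?thesis
  proof (cases "d = 0")
    case True
    have noE: "\<not> Ep u w" if "u < n" "w < n" for u w
    proof
      assume e: "Ep u w"
      have "Ep w u" using e sym unfolding Ep_def by blast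
      have "u \<noteq> w" using e irr unfolding Ep_def by blast
      then consider "w < u" | "u < w" by linarith
      then show False
      proof cases
        case 1
        have "finite {x. x < u \<and> Ep u x}" by simp
        moreover have "w \<in> {x. x < u \<and> Ep u x}" using 1 e by simp
        ultimately have "card {x. x < u \<and> Ep u x} \<noteq> 0" by (metis card_0_eq empty_iff)
        moreover have "card {x. x < u \<and> Ep u x} \<le> d" using deg[OF that(1)] .
        ultimately show False using True by linarith
      next
        case 2
        have "finite {x. x < w \<and> Ep w x}" by simp
        moreover have "x \<in> {x. x < w \<and> Ep w x}" if "x = u" for x using 2 \<open>Ep w u\<close> that by simp
        ultimately have "card {x. x < w \<and> Ep w x} \<noteq> 0" by (metis card_0_eq empty_iff)
        moreover have "card {x. x < w \<and> Ep w x} \<le> d" using deg[OF that(2)] .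
        ultimately show False using True by linarith
      qed
    qed
    have Ks: "{} \<subseteq> {1..<n}" by simp
    note ps = pos_seq[OF Ks]
    have "twin_width V E \<le> 0"
    proof (rule transfer[OF inj img, of "Q {}"])
      show "Q {} n = (\<lambda>p. {p}) ` {..<n}" unfolding Q_def using ps(1) .
      show "\<And>i. 1 \<le> i \<Longrightarrow> i < n \<Longrightarrow> \<exists>A\<in>Q {} (Suc i). \<exists>B\<in>Q {} (Suc i). A \<noteq> B \<and> Q {} i = (Q {} (Suc i) - {A, B}) \<union> {A \<union> B}"
        unfolding Q_def using ps(2) by blast
      show "\<And>i. Q {} i \<subseteq> Pow {..<n}" by (rule Qsub)
      show "\<And>i. finite (Q {} i)" by (rule Qfin)
      fix i B assume iB: "1 \<le> i" "i \<le> n" "B \<in> Q {} i"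
      have "{W \<in> Q {} i. W \<noteq> B \<and> red_edge (\<lambda>a b. E (f a) (f b)) B W} = {}"
      proof -
        have "\<not> red_edge Ep B W" if "W \<in> Q {} i" for W
        proof
          assume "red_edge Ep B W"
          then obtain u w where "u \<in> B" "w \<in> W" "Ep u w" unfolding red_edge_def by blast
          moreover have "u < n" "w < n" using \<open>u \<in> B\<close> \<open>w \<in> W\<close> iB(3) that Qsub by blast+
          ultimately show False using noE by blast
        qed
        then show ?thesis unfolding Ep_def by blast
      qed
      then show "red_degree (\<lambda>a b. E (f a) (f b)) (Q {} i) B \<le> 0" unfolding red_degree_def
        by (simp only: card.empty le_refl)
    qed
    then show ?thesis by simp
  next
    case False
    then have d1: "1 \<le> d" by simp
    define W where "W = nat \<lfloor>sqrt (2 * real d * real n) + 2 * real d\<rfloor>"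
    define F where "F = (\<lambda>k. \<Sum>j<k. (W - j) div d)"
    note am = arith_main[OF d1, of n, folded W_def]
    have Fdef: "\<And>k. F k = (\<Sum>j<k. (W - j) div d)" unfolding F_def by simp
    have Fm: "\<And>a b. a \<le> b \<Longrightarrow> F a \<le> F b" using F_mono[OF Fdef] by blast
    have FW: "n \<le> F W" using am(1) unfolding F_def by simp
    have W1: "1 \<le> W" using am(2) d1 by simp
    have F1: "1 \<le> F 1"
    proof -
      have "2 * d div d \<le> W div d" using am(2) by (rule div_le_mono)
      then have "2 \<le> W div d" using d1 by simp
      then show ?thesis unfolding F_def by simp
    qed
    define K where "K = (\<lambda>k. n - F k) ` {k. 1 \<le> k \<and> F k < n}"
    note kf = K_facts[OF Fm FW F1 K_def]
    note ps = pos_seq[OF kf(1)]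
    have "twin_width V E \<le> W"
    proof (rule transfer[OF inj img, of "Q K"])
      show "Q K n = (\<lambda>p. {p}) ` {..<n}" unfolding Q_def using ps(1) .
      show "\<And>i. 1 \<le> i \<Longrightarrow> i < n \<Longrightarrow> \<exists>A\<in>Q K (Suc i). \<exists>B\<in>Q K (Suc i). A \<noteq> B \<and> Q K i = (Q K (Suc i) - {A, B}) \<union> {A \<union> B}"
        unfolding Q_def using ps(2) by blast
      show "\<And>i. Q K i \<subseteq> Pow {..<n}" by (rule Qsub)
      show "\<And>i. finite (Q K i)" by (rule Qfin)
      fix i B assume iB: "1 \<le> i" "i \<le> n" "B \<in> Q K i"
      have BB: "B \<in> blocks n (Rc n K (n - i))" using iB(3) unfolding Q_def .
      from Rc_shape[OF kf(1), of "n - i"]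
      show "red_degree (\<lambda>a b. E (f a) (f b)) (Q K i) B \<le> W"
      proof
        assume "\<exists>t. Rc n K (n - i) = Ph n K t"
        then obtain t where t: "Rc n K (n - i) = Ph n K t" by blast
        have "red_degree Ep (blocks n (Ph n K t)) B \<le> W"
          using phase1_bound[OF d1 Fdef FW W1 F1 K_def deg] BB t by simp
        then show ?thesis unfolding Q_def Ep_def t .
      next
        assume sK: "Rc n K (n - i) \<subseteq> K"
        have "red_degree Ep (blocks n (Rc n K (n - i))) B \<le> card (blocks n (Rc n K (n - i))) - 1"
          using red_le_card[OF blocks_finite BB] .
        also have "\<dots> \<le> card (Rc n K (n - i))" using blocks_card[OF Rc_fin, of n n K "n - i"] by simp
        also have "\<dots> \<le> card K" using sK kf(2) by (rule card_mono[rotated])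
        also have "\<dots> \<le> W" using kf(3) by simp
        finally show ?thesis unfolding Q_def Ep_def .
      qed
    qed
    then have "real (twin_width V E) \<le> real W" by simp
    also have "\<dots> \<le> sqrt (2 * real d * real n) + 2 * real d" using am(3) .
    finally show ?thesis using cV by simp
  qed
qed

end
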